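(* Let $n\ge3$, $\beta=\frac n{n-2}$ and $\xi(x)=\prod_{i=0}^\infty\left(1+\frac{\beta^i}{\sqrt{2\beta^i-1}}x\right)^{\beta^{-i}}$. Then (i) $\xi(x)\le(1+x)^n$ for every $x\ge0$; (ii) $\xi(x)\le(4e)^{n/4}x^{n/2}$ for every $x\ge1$. *)

theory Defs
  imports "HOL-Analysis.Analysis"
begin

definition beta :: "nat \<Rightarrow> real" where
  "beta n = real n / (real n - 2)"

definition xi :: "nat \<Rightarrow> real \<Rightarrow> real" where
  "xi n x = (\<Prod>i. (1 + beta n ^ i / sqrt (2 * beta n ^ i - 1) * x) powr (beta n powr (- real i)))"

end

theory Submission imports Defs begin

lemma c_bounds:
  fixes b :: real assumes "b > 1"
  shows "0 \<le> b^i / sqrt (2*b^i - 1) \<and> b^i / sqrt (2*b^i - 1) \<le> sqrt (b^i)"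
proof -
  have y1: "b^i \<ge> 1" using assms by simp
  have s1: "sqrt (b^i) \<le> sqrt (2*b^i - 1)" using y1 by simp
  have sp: "sqrt (b^i) > 0" using y1 by simp
  have "b^i / sqrt (2*b^i - 1) \<le> b^i / sqrt (b^i)"
    using s1 sp y1 by (intro divide_left_mono) auto
  also have "\<dots> = sqrt (b^i)" using sp by (metis real_div_sqrt y1 order_trans zero_le_one)
  finally show ?thesis using y1 by simp
qed

lemma g_bound_summ:
  fixes b x :: real assumes "b > 1" "x \<ge> 0"
  shows "0 \<le> inverse b ^ i * ln (1 + b^i / sqrt (2*b^i - 1) * x)"
    and "inverse b ^ i * ln (1 + b^i / sqrt (2*b^i - 1) * x) \<le> x * sqrt (inverse b) ^ i"
proof -
  have c: "0 \<le> b^i / sqrt (2*b^i - 1)" "b^i / sqrt (2*b^i - 1) \<le> sqrt (b^i)"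
    using c_bounds[OF assms(1)] by auto
  have ib: "inverse b ^ i > 0" using assms by simp
  have cx: "0 \<le> b^i / sqrt (2*b^i - 1) * x" by (rule mult_nonneg_nonneg[OF c(1) assms(2)])
  show "0 \<le> inverse b ^ i * ln (1 + b^i / sqrt (2*b^i - 1) * x)"
    using cx ib by (intro mult_nonneg_nonneg) auto
  have "ln (1 + b^i / sqrt (2*b^i - 1) * x) \<le> b^i / sqrt (2*b^i - 1) * x"
    by (rule ln_add_one_self_le_self[OF cx])
  also have "\<dots> \<le> sqrt (b^i) * x" using c assms by (intro mult_right_mono) auto
  finally have "inverse b ^ i * ln (1 + b^i / sqrt (2*b^i - 1) * x) \<le> inverse b ^ i * (sqrt (b^i) * x)"
    using ib by (intro mult_left_mono) auto
  also have "inverse b ^ i * sqrt (b^i) = sqrt (inverse b) ^ i"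
  proof -
    have "inverse b ^ i * sqrt (b^i) = inverse (sqrt (b^i))"
      using assms by (simp add: power_inverse field_simps)
    thus ?thesis by (simp add: real_sqrt_power real_sqrt_inverse power_inverse)
  qed
  hence "inverse b ^ i * (sqrt (b^i) * x) = x * sqrt (inverse b) ^ i" by (metis mult.assoc mult.commute)
  finally show "inverse b ^ i * ln (1 + b^i / sqrt (2*b^i - 1) * x) \<le> x * sqrt (inverse b) ^ i" .
qed

lemma prod_exp:
  fixes b x :: real assumes "b > 1" "x \<ge> 0"
  shows "summable (\<lambda>i. inverse b ^ i * ln (1 + b^i / sqrt (2*b^i - 1) * x))"
    and "(\<Prod>i. (1 + b ^ i / sqrt (2 * b ^ i - 1) * x) powr (b powr (- real i)))
         = exp (\<Sum>i. inverse b ^ i * ln (1 + b^i / sqrt (2*b^i - 1) * x))"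
proof -
  have "inverse b < 1" using assms by (simp add: field_simps)
  moreover have "inverse b > 0" using assms by simp
  ultimately have q: "\<bar>sqrt (inverse b)\<bar> < 1" by simp
  have sg: "summable (\<lambda>i. x * sqrt (inverse b) ^ i)"
    using q by (intro summable_mult summable_geometric) auto
  show sm: "summable (\<lambda>i. inverse b ^ i * ln (1 + b^i / sqrt (2*b^i - 1) * x))"
    by (rule summable_comparison_test[OF _ sg]) (use g_bound_summ[OF assms] in auto)
  have eq: "(1 + b ^ i / sqrt (2 * b ^ i - 1) * x) powr (b powr (- real i))
      = exp (inverse b ^ i * ln (1 + b^i / sqrt (2*b^i - 1) * x))" for i
  proof -
    have "0 \<le> b ^ i / sqrt (2 * b ^ i - 1) * x"
      using c_bounds[OF assms(1), of i] assms(2) by (intro mult_nonneg_nonneg) auto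
    hence "0 < 1 + b ^ i / sqrt (2 * b ^ i - 1) * x" by linarith
    moreover have "b powr (- real i) = inverse b ^ i"
      using assms by (simp add: powr_minus powr_realpow power_inverse)
    ultimately show ?thesis by (simp add: powr_def)
  qed
  show "(\<Prod>i. (1 + b ^ i / sqrt (2 * b ^ i - 1) * x) powr (b powr (- real i)))
         = exp (\<Sum>i. inverse b ^ i * ln (1 + b^i / sqrt (2*b^i - 1) * x))"
    unfolding eq by (rule prodinf_exp[OF sm])
qed

lemma rq: fixes b :: real assumes "b > 1" shows "inverse b ^ i * sqrt (b^i) = sqrt (inverse b) ^ i"
proof -
  have "inverse b ^ i * sqrt (b^i) = inverse (sqrt (b^i))"
    using assms by (simp add: power_inverse field_simps)
  thus ?thesis by (simp add: real_sqrt_power real_sqrt_inverse power_inverse)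
qed

lemma beta_facts: assumes "n \<ge> 3"
  shows "beta n > 1" "inverse (beta n) = (real n - 2) / real n"
proof -
  have "real n \<ge> 3" using assms by simp
  thus "beta n > 1" "inverse (beta n) = (real n - 2) / real n" unfolding beta_def by (auto simp: field_simps)
qed

lemma part1:
  fixes x :: real assumes n: "n \<ge> 3" and x: "x \<ge> 0"
  shows "exp (\<Sum>i. inverse (beta n) ^ i * ln (1 + beta n ^ i / sqrt (2 * beta n ^ i - 1) * x)) \<le> (1 + x) ^ n"
proof -
  define b where "b = beta n"
  define r where "r = inverse b"
  define q where "q = sqrt r"
  have b1: "b > 1" using beta_facts[OF n] b_def by simp
  have rdef: "r = (real n - 2) / real n" using beta_facts[OF n] b_def r_def by simp
  have n3: "real n \<ge> 3" using n by simp
  have r0: "0 < r" "r < 1" unfolding rdef using n3 by auto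
  have q0: "0 < q" "q < 1" using r0 q_def by auto
  have rs: "(\<lambda>i. r^i) sums (real n / 2)"
  proof -
    have "(\<lambda>i. r^i) sums (1 / (1 - r))" using r0 by (intro geometric_sums) auto
    moreover have "1 - r = 2 / real n" unfolding rdef using n3 by (simp add: field_simps)
    hence "1 / (1 - r) = real n / 2" by simp
    ultimately show ?thesis by simp
  qed
  have qs: "(\<lambda>i. q^i) sums (1 / (1 - q))" using q0 by (intro geometric_sums) auto
  have qn: "1 / (1 - q) \<le> real n"
  proof -
    have "r \<le> ((real n - 1) / real n)^2" unfolding rdef power2_eq_square using n3
      by (simp add: field_simps power2_eq_square)
    hence "q \<le> sqrt (((real n - 1) / real n)^2)" unfolding q_def by (rule real_sqrt_le_mono)
    also have "\<dots> = (real n - 1) / real n" using n3 by simp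
    finally have "q \<le> (real n - 1) / real n" .
    hence "q * real n \<le> real n - 1" using n3 by (simp add: field_simps)
    thus ?thesis using q0 n3 by (simp add: field_simps)
  qed
  define g where "g i = r ^ i * ln (1 + b ^ i / sqrt (2 * b ^ i - 1) * x)" for i
  define h where "h i = r^i * ln (1 + 2*x) + (x / (1 + 2*x)) * (q^i - 2 * r^i)" for i
  have gh: "g i \<le> h i" for i
  proof -
    define c where "c = b ^ i / sqrt (2 * b ^ i - 1)"
    have c: "0 \<le> c" "c \<le> sqrt (b^i)" using c_bounds[OF b1, of i] c_def by auto
    have p1: "0 < 1 + 2*x" using x by simp
    have p2: "0 < 1 + c*x" using c x by (simp add: add_pos_nonneg)
    have "ln (1 + c*x) - ln (1 + 2*x) = ln ((1 + c*x) / (1 + 2*x))" using p1 p2 by (simp add: ln_div)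
    also have "\<dots> \<le> (1 + c*x) / (1 + 2*x) - 1" using p1 p2 by (intro ln_le_minus_one) auto
    also have "\<dots> = x / (1 + 2*x) * (c - 2)" using p1 by (simp add: field_simps)
    also have "\<dots> \<le> x / (1 + 2*x) * (sqrt (b^i) - 2)" using c x p1 by (intro mult_left_mono) auto
    finally have "ln (1 + c*x) \<le> ln (1 + 2*x) + x / (1 + 2*x) * (sqrt (b^i) - 2)" by simp
    hence "r^i * ln (1 + c*x) \<le> r^i * (ln (1 + 2*x) + x / (1 + 2*x) * (sqrt (b^i) - 2))"
      using r0 by (intro mult_left_mono) auto
    also have "\<dots> = r^i * ln (1 + 2*x) + (x / (1 + 2*x)) * (r^i * sqrt (b^i) - 2 * r^i)"
      by (simp add: algebra_simps add_divide_distrib[symmetric])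
    also have "r^i * sqrt (b^i) = q^i" unfolding r_def q_def by (rule rq[OF b1])
    finally show ?thesis unfolding g_def h_def c_def .
  qed
  have hs: "h sums (real n / 2 * ln (1 + 2*x) + (x / (1 + 2*x)) * (1 / (1 - q) - 2 * (real n / 2)))"
    unfolding h_def
    by (intro sums_add sums_mult sums_diff qs rs sums_mult2)
  have gsm: "summable g" unfolding g_def r_def using prod_exp(1)[OF b1 x] by simp
  have "suminf g \<le> real n / 2 * ln (1 + 2*x) + (x / (1 + 2*x)) * (1 / (1 - q) - 2 * (real n / 2))"
    by (rule sums_le[OF _ summable_sums[OF gsm] hs]) (use gh in auto)
  also have "\<dots> \<le> real n / 2 * ln (1 + 2*x)"
  proof -
    have "(x / (1 + 2*x)) * (1 / (1 - q) - 2 * (real n / 2)) \<le> 0"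
      using qn x by (intro mult_nonneg_nonpos) auto
    thus ?thesis by linarith
  qed
  also have "\<dots> \<le> real n / 2 * ln ((1 + x)^2)"
    using x by (intro mult_left_mono ln_mono) (auto simp: power2_eq_square algebra_simps)
  also have "\<dots> = ln ((1 + x)^n)" using x by (simp add: ln_realpow)
  finally have "exp (suminf g) \<le> exp (ln ((1 + x)^n))" by simp
  also have "\<dots> = (1 + x)^n" using x by simp
  finally show ?thesis unfolding g_def r_def b_def .
qed

lemma part2:
  fixes x :: real assumes n: "n \<ge> 3" and x: "x \<ge> 1"
  shows "exp (\<Sum>i. inverse (beta n) ^ i * ln (1 + beta n ^ i / sqrt (2 * beta n ^ i - 1) * x))
     \<le> (4 * exp 1) powr (real n / 4) * x powr (real n / 2)"
proof -
  define b where "b = beta n"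
  define r where "r = inverse b"
  have b1: "b > 1" using beta_facts[OF n] b_def by simp
  have rdef: "r = (real n - 2) / real n" using beta_facts[OF n] b_def r_def by simp
  have n3: "real n \<ge> 3" using n by simp
  have r0: "0 < r" "r < 1" unfolding rdef using n3 by auto
  have r1: "1 - r = 2 / real n" unfolding rdef using n3 by (simp add: field_simps)
  have rs: "(\<lambda>i. r^i) sums (real n / 2)"
  proof -
    have "(\<lambda>i. r^i) sums (1 / (1 - r))" using r0 by (intro geometric_sums) auto
    moreover have "1 / (1 - r) = real n / 2" using r1 by simp
    ultimately show ?thesis by simp
  qed
  have rs2: "(\<lambda>i. of_nat (Suc i) * r^i) sums (real n ^ 2 / 4)"
  proof -
    have "(\<lambda>i. of_nat (Suc i) * r^i) sums (1 / (1 - r)^2)" using r0 by (intro geometric_deriv_sums) auto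
    moreover have "1 / (1 - r)^2 = real n ^ 2 / 4" using r1 by (simp add: power2_eq_square)
    ultimately show ?thesis by simp
  qed
  define g where "g i = r ^ i * ln (1 + b ^ i / sqrt (2 * b ^ i - 1) * x)" for i
  define h where "h i = r^i * (ln x + ln 2) + (ln b / 2) * (of_nat (Suc i) * r^i - r^i)" for i
  have gh: "g i \<le> h i" for i
  proof -
    define c where "c = b ^ i / sqrt (2 * b ^ i - 1)"
    have c: "0 \<le> c" "c \<le> sqrt (b^i)" using c_bounds[OF b1, of i] c_def by auto
    have y1: "sqrt (b^i) \<ge> 1" using b1 by simp
    have p2: "0 < 1 + c*x" using c x by (simp add: add_pos_nonneg)
    have "1 \<le> x * sqrt (b^i)" using x y1 by (metis mult_mono' mult_1 zero_le_one order_trans)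
    moreover have "c * x \<le> x * sqrt (b^i)" using c x by (simp add: mult.commute mult_left_mono)
    ultimately have "1 + c*x \<le> 2 * x * sqrt (b^i)" by simp
    hence "ln (1 + c*x) \<le> ln (2 * x * sqrt (b^i))" using p2 by simp
    also have "\<dots> = ln 2 + ln x + ln (b^i) / 2" using x b1 by (simp add: ln_mult ln_sqrt)
    also have "\<dots> = ln 2 + ln x + real i * ln b / 2" using b1 by (simp add: ln_realpow)
    finally have "r^i * ln (1 + c*x) \<le> r^i * (ln 2 + ln x + real i * ln b / 2)"
      using r0 by (intro mult_left_mono) auto
    also have "\<dots> = h i" unfolding h_def by (simp add: algebra_simps)
    finally show ?thesis unfolding g_def c_def .
  qed
  have hs: "h sums (real n / 2 * (ln x + ln 2) + (ln b / 2) * (real n ^ 2 / 4 - real n / 2))"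
    unfolding h_def by (intro sums_add sums_mult sums_diff rs rs2 sums_mult2)
  have gsm: "summable g" unfolding g_def r_def using prod_exp(1)[OF b1] x by simp
  have "suminf g \<le> real n / 2 * (ln x + ln 2) + (ln b / 2) * (real n ^ 2 / 4 - real n / 2)"
    by (rule sums_le[OF _ summable_sums[OF gsm] hs]) (use gh in auto)
  also have "\<dots> \<le> real n / 2 * (ln x + ln 2) + real n / 4"
  proof -
    have lb: "ln b \<le> 2 / (real n - 2)"
    proof -
      have "ln b \<le> b - 1" using b1 by (intro ln_le_minus_one) auto
      also have "b - 1 = 2 / (real n - 2)" unfolding b_def beta_def using n3 by (simp add: field_simps)
      finally show ?thesis .
    qed
    have e: "real n ^ 2 / 4 - real n / 2 = real n * (real n - 2) / 4" by (simp add: power2_eq_square field_simps)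
    have "(ln b / 2) * (real n * (real n - 2) / 4) \<le> (2 / (real n - 2) / 2) * (real n * (real n - 2) / 4)"
    proof (rule mult_right_mono)
      show "ln b / 2 \<le> 2 / (real n - 2) / 2" using lb by (rule divide_right_mono) simp
      show "0 \<le> real n * (real n - 2) / 4" using n3 by simp
    qed
    also have "\<dots> = real n / 4" using n3 by (simp add: field_simps)
    finally show ?thesis unfolding e by linarith
  qed
  also have "\<dots> = real n / 4 * ln (4 * exp 1) + real n / 2 * ln x"
  proof -
    have "ln (4 * exp 1 :: real) = 2 * ln 2 + 1"
    proof -
      have "ln (4 * exp 1 :: real) = ln 4 + 1" by (simp add: ln_mult)
      moreover have "ln (4::real) = 2 * ln 2" using ln_realpow[of 2 2] by simp
      ultimately show ?thesis by simp
    qed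
    thus ?thesis by (simp add: algebra_simps)
  qed
  finally have "exp (suminf g) \<le> exp (real n / 4 * ln (4 * exp 1) + real n / 2 * ln x)" by simp
  also have "\<dots> = (4 * exp 1) powr (real n / 4) * x powr (real n / 2)"
    using x by (simp add: powr_def exp_add mult.commute)
  finally show ?thesis unfolding g_def r_def b_def .
qed

theorem lemmaB2:
  fixes n :: nat
  assumes "n \<ge> 3"
  shows "(\<forall>x::real. x \<ge> 0 \<longrightarrow> xi n x \<le> (1 + x) ^ n) \<and>
         (\<forall>x::real. x \<ge> 1 \<longrightarrow> xi n x \<le> (4 * exp 1) powr (real n / 4) * x powr (real n / 2))"
proof -
  have b1: "beta n > 1" using beta_facts[OF assms] by simp
  have xe: "xi n x = exp (\<Sum>i. inverse (beta n) ^ i * ln (1 + beta n ^ i / sqrt (2 * beta n ^ i - 1) * x))"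
    if "x \<ge> 0" for x
    unfolding xi_def by (rule prod_exp(2)[OF b1 that])
  show ?thesis
    using xe part1[OF assms] part2[OF assms] by auto
qed

end
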